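(* Let $|\psi\rangle,|\phi\rangle,|e\rangle,|f\rangle$ be unit vectors in $\mathbb{C}^2$ and let $\mathcal{D}$ be the set of depolarizing channels $\Psi_\rho(A)=(\operatorname{tr}A)\rho$, $\rho$ a density operator on $\mathbb{C}^2$. Then $$\max_{\Psi\in\mathcal{D}}\left\{\frac12\langle e|\Psi(|\psi\rangle\langle\psi|)|e\rangle+\frac12\langle f|\Psi(|\phi\rangle\langle\phi|)|f\rangle\right\}=\frac12\left(1+|\langle e|f\rangle|\right).$$ This value equals $1$ if and only if $|\langle e|f\rangle|=1$; consequently, $(|\psi\rangle,|\phi\rangle)$ is jointly convertible into $(|e\rangle,|f\rangle)$ within $\mathcal{D}$ if and only if $|\langle e|f\rangle|=1$.
   Context: For a set $\mathcal{X}$ of quantum channels on $\mathcal{L}(\mathbb{C}^2)$, $(|\psi\rangle,|\phi\rangle)$ is jointly convertible into $(|e\rangle,|f\rangle)$ within $\mathcal{X}$ if there exists $\Psi\in\mathcal{X}$ with $\Psi(|\psi\rangle\langle\psi|)=|e\rangle\langle e|$ and $\Psi(|\phi\rangle\langle\phi|)=|f\rangle\langle f|$. *)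

theory Defs
  imports "HOL-Analysis.Analysis"
begin

text \<open>Vectors of C^2 are complex^2, operators on C^2 are complex^2^2
  (row index first). Bra-ket inner product, antilinear in the first argument.\<close>

definition braket :: "complex^2 \<Rightarrow> complex^2 \<Rightarrow> complex" where
  "braket x y = (\<Sum>i\<in>UNIV. cnj (x $ i) * y $ i)"

definition ketbra :: "complex^2 \<Rightarrow> complex^2^2" where
  "ketbra x = (\<chi> i j. x $ i * cnj (x $ j))"

definition density_op :: "complex^2^2 \<Rightarrow> bool" where
  "density_op \<rho> \<longleftrightarrow>
     (\<forall>v. braket v (\<rho> *v v) \<in> \<real> \<and> 0 \<le> Re (braket v (\<rho> *v v))) \<and> trace \<rho> = 1"

definition depol :: "complex^2^2 \<Rightarrow> complex^2^2 \<Rightarrow> complex^2^2" where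
  "depol \<rho> A = (\<chi> i j. trace A * \<rho> $ i $ j)"

definition depol_channels :: "(complex^2^2 \<Rightarrow> complex^2^2) set" where
  "depol_channels = {depol \<rho> | \<rho>. density_op \<rho>}"

definition jointly_convertible ::
  "(complex^2^2 \<Rightarrow> complex^2^2) set \<Rightarrow> complex^2 \<Rightarrow> complex^2 \<Rightarrow> complex^2 \<Rightarrow> complex^2 \<Rightarrow> bool" where
  "jointly_convertible X \<psi> \<phi> e f \<longleftrightarrow>
     (\<exists>\<Psi>\<in>X. \<Psi> (ketbra \<psi>) = ketbra e \<and> \<Psi> (ketbra \<phi>) = ketbra f)"

text \<open>Objective value (a real number for positive Psi(.)); we take its real part.\<close>
definition success_val ::
  "(complex^2^2 \<Rightarrow> complex^2^2) \<Rightarrow> complex^2 \<Rightarrow> complex^2 \<Rightarrow> complex^2 \<Rightarrow> complex^2 \<Rightarrow> real" where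
  "success_val \<Psi> \<psi> \<phi> e f =
     Re (braket e (\<Psi> (ketbra \<psi>) *v e) / 2 + braket f (\<Psi> (ketbra \<phi>) *v f) / 2)"

end

theory Submission
  imports Defs
begin

lemma braket_2: "braket x y = cnj (x$1) * y$1 + cnj (x$2) * y$2"
  by (simp add: braket_def sum_2)

lemma mv_2: "((A::complex^2^2) *v v) $ i = A$i$1 * v$1 + A$i$2 * v$2"
  by (simp add: matrix_vector_mult_def sum_2)

lemma trace_2: "trace (A::complex^2^2) = A$1$1 + A$2$2"
  by (simp add: trace_def sum_2)

lemma norm_2: "norm (v::complex^2) ^ 2 = cmod (v$1)^2 + cmod (v$2)^2"
  by (simp add: norm_vec_def L2_set_def sum_2)

lemma unit_2: "norm (v::complex^2) = 1 \<Longrightarrow> cmod (v$1)^2 + cmod (v$2)^2 = 1"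
  using norm_2[of v] by simp

definition vec2 :: "complex \<Rightarrow> complex \<Rightarrow> complex^2" where
  "vec2 x y = (\<chi> i. if i = 1 then x else y)"

lemma vec2_nth [simp]: "vec2 x y $ 1 = x" "vec2 x y $ 2 = y"
  by (simp_all add: vec2_def)

lemma quad: "braket v (A *v v) = cnj (v$1) * (A$1$1 * v$1 + A$1$2 * v$2) + cnj (v$2) * (A$2$1 * v$1 + A$2$2 * v$2)"
  by (simp add: braket_2 mv_2)

lemma quad_herm:
  assumes "A$1$1 = of_real p" "A$2$2 = of_real s" "A$1$2 = q" "A$2$1 = cnj q"
  shows "braket v (A *v v) = of_real (p * cmod (v$1)^2 + s * cmod (v$2)^2 + 2 * Re (q * cnj (v$1) * v$2))"
  unfolding quad assms complex_eq_iff cmod_power2 by (simp add: power2_eq_square algebra_simps)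

lemma pos_form:
  fixes p s :: real and q v1 v2 :: complex
  assumes "0 \<le> p" "0 \<le> s" "cmod q ^ 2 \<le> p * s"
  shows "0 \<le> p * cmod v1^2 + s * cmod v2^2 + 2 * Re (q * cnj v1 * v2)"
proof -
  define Q where "Q = cmod q"
  define a where "a = cmod v1"
  define b where "b = cmod v2"
  have Qn: "0 \<le> Q" "0 \<le> a" "0 \<le> b" by (auto simp: Q_def a_def b_def)
  have "- Re (q * cnj v1 * v2) \<le> cmod (q * cnj v1 * v2)"
    using abs_Re_le_cmod[of "q * cnj v1 * v2"] by linarith
  also have "\<dots> = Q * a * b" by (simp add: Q_def a_def b_def norm_mult)
  finally have r: "- Re (q * cnj v1 * v2) \<le> Q * a * b" .
  have "(2 * Q * a * b)^2 = 4 * Q^2 * (a^2 * b^2)" by (simp add: power2_eq_square)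
  also have "\<dots> \<le> 4 * (p * s) * (a^2 * b^2)"
    using assms(3) by (intro mult_right_mono mult_left_mono) (auto simp: Q_def)
  also have "\<dots> \<le> (p * a^2 + s * b^2)^2"
  proof -
    have "0 \<le> (p * a^2 - s * b^2)^2" by simp
    thus ?thesis by (simp add: power2_eq_square algebra_simps)
  qed
  finally have "2 * Q * a * b \<le> p * a^2 + s * b^2"
    by (rule power2_le_imp_le) (use assms in auto)
  thus ?thesis using r by (simp add: a_def b_def)
qed

lemma density_of:
  fixes A :: "complex^2^2"
  assumes "A$1$1 = of_real p" "A$2$2 = of_real s" "A$1$2 = q" "A$2$1 = cnj q"
    and "0 \<le> p" "0 \<le> s" "p + s = 1" "cmod q ^ 2 \<le> p * s"
  shows "density_op A"
  unfolding density_op_def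
proof (intro conjI allI)
  fix v
  show "braket v (A *v v) \<in> \<real>" by (simp add: quad_herm[OF assms(1-4)])
  show "0 \<le> Re (braket v (A *v v))"
    using pos_form[OF assms(5,6,8)] by (simp add: quad_herm[OF assms(1-4)])
  show "trace A = 1" using assms(1,2,7) by (simp add: trace_2 flip: of_real_add)
qed

lemma psd_det:
  fixes A :: "complex^2^2"
  assumes "A$1$1 = of_real p" "A$2$2 = of_real s" "A$1$2 = q" "A$2$1 = cnj q"
    and P: "\<And>v. 0 \<le> Re (braket v (A *v v))" and "0 \<le> p" "0 \<le> s" "p + s = 1"
  shows "cmod q ^ 2 \<le> p * s"
proof -
  note H = quad_herm[OF assms(1-4)]
  have "0 \<le> p * s^2 + s * cmod q ^ 2 + 2 * Re (q * s * - cnj q)"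
    using P[of "vec2 (of_real s) (- cnj q)"] unfolding H by (simp add: norm_mult)
  moreover have "Re (q * s * - cnj q) = - s * cmod q ^ 2"
    unfolding cmod_power2 by (simp add: algebra_simps power2_eq_square)
  ultimately have 1: "0 \<le> s * (p * s - cmod q ^ 2)"
    by (simp add: power2_eq_square algebra_simps)
  have "0 \<le> p * cmod q ^ 2 + s * p^2 + 2 * Re (q * - cnj q * p)"
    using P[of "vec2 (- q) (of_real p)"] unfolding H by (simp add: norm_mult)
  moreover have "Re (q * - cnj q * p) = - p * cmod q ^ 2"
    unfolding cmod_power2 by (simp add: algebra_simps power2_eq_square)
  ultimately have 2: "0 \<le> p * (p * s - cmod q ^ 2)"
    by (simp add: power2_eq_square algebra_simps)
  have "0 \<le> (p + s) * (p * s - cmod q ^ 2)" using 1 2 by (simp add: algebra_simps)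
  thus ?thesis using assms(8) by simp
qed

lemma density_props:
  fixes A :: "complex^2^2"
  assumes "density_op A"
  shows "A$1$1 = of_real (Re (A$1$1))" "A$2$2 = of_real (Re (A$2$2))" "A$2$1 = cnj (A$1$2)"
    "0 \<le> Re (A$1$1)" "0 \<le> Re (A$2$2)" "Re (A$1$1) + Re (A$2$2) = 1"
    "cmod (A$1$2) ^ 2 \<le> Re (A$1$1) * Re (A$2$2)"
proof -
  have R: "braket v (A *v v) \<in> \<real>" and P: "0 \<le> Re (braket v (A *v v))" and T: "trace A = 1" for v
    using assms unfolding density_op_def by auto
  have i1: "Im (A$1$1) = 0" and p1: "0 \<le> Re (A$1$1)"
    using R[of "vec2 1 0"] P[of "vec2 1 0"] by (auto simp: quad complex_is_Real_iff)
  have i2: "Im (A$2$2) = 0" and p2: "0 \<le> Re (A$2$2)"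
    using R[of "vec2 0 1"] P[of "vec2 0 1"] by (auto simp: quad complex_is_Real_iff)
  have a: "Im (A$1$2) + Im (A$2$1) = 0"
    using R[of "vec2 1 1"] i1 i2 by (auto simp: quad complex_is_Real_iff)
  have b: "Re (A$1$2) - Re (A$2$1) = 0"
    using R[of "vec2 1 \<i>"] i1 i2 by (auto simp: quad complex_is_Real_iff)
  show e1: "A$1$1 = of_real (Re (A$1$1))" using i1 by (simp add: complex_eq_iff)
  show e2: "A$2$2 = of_real (Re (A$2$2))" using i2 by (simp add: complex_eq_iff)
  show e3: "A$2$1 = cnj (A$1$2)" using a b by (simp add: complex_eq_iff)
  show "0 \<le> Re (A$1$1)" "0 \<le> Re (A$2$2)" by fact+
  show sum1: "Re (A$1$1) + Re (A$2$2) = 1" using T by (simp add: trace_2 complex_eq_iff)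
  show "cmod (A$1$2) ^ 2 \<le> Re (A$1$1) * Re (A$2$2)"
    by (rule psd_det[OF e1 e2 refl e3 _ p1 p2 sum1]) (use P in blast)
qed

lemma NN:
  fixes e1 e2 f1 f2 :: complex
  shows "4 * Re (cnj e1 * e2) * Re (cnj f1 * f2) + 4 * Im (cnj e1 * e2) * Im (cnj f1 * f2)
     + (cmod e1^2 - cmod e2^2) * (cmod f1^2 - cmod f2^2)
     = 2 * cmod (cnj e1 * f1 + cnj e2 * f2)^2 - (cmod e1^2 + cmod e2^2) * (cmod f1^2 + cmod f2^2)"
  unfolding cmod_power2 by (simp add: power2_eq_square algebra_simps)

lemma bloch:
  fixes p s :: real and q v1 v2 :: complex
  assumes "p + s = 1" "cmod v1^2 + cmod v2^2 = 1"
  shows "p * cmod v1^2 + s * cmod v2^2 + 2 * Re (q * cnj v1 * v2)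
    = 1/2 + ((2 * Re q) * (2 * Re (cnj v1 * v2)) + (2 * Im q) * (- 2 * Im (cnj v1 * v2))
             + (p - s) * (cmod v1^2 - cmod v2^2)) / 2"
proof -
  have s: "s = 1 - p" using assms(1) by simp
  have b: "cmod v2^2 = 1 - cmod v1^2" using assms(2) by simp
  have "Re (q * cnj v1 * v2) = Re q * Re (cnj v1 * v2) - Im q * Im (cnj v1 * v2)"
    by (simp add: mult.assoc del: complex_cnj_mult)
  moreover have "\<And>c x y u w. p*c + (1-p)*(1-c) + 2*(x*y - u*w) = 1/2 + ((2*x)*(2*y) + (2*u)*(-2*w) + (p-(1-p))*(c-(1-c)))/2"
    by (simp add: field_simps)
  ultimately show ?thesis unfolding s b by presburger
qed

lemma lagrange3:
  fixes r1 r2 r3 m1 m2 m3 :: real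
  shows "(r1*m1 + r2*m2 + r3*m3)^2 \<le> (r1^2+r2^2+r3^2) * (m1^2+m2^2+m3^2)"
proof -
  have "(r1^2+r2^2+r3^2) * (m1^2+m2^2+m3^2) - (r1*m1 + r2*m2 + r3*m3)^2
     = (r1*m2-r2*m1)^2 + (r1*m3-r3*m1)^2 + (r2*m3-r3*m2)^2"
    by (simp add: power2_eq_square algebra_simps)
  moreover have "0 \<le> (r1*m2-r2*m1)^2 + (r1*m3-r3*m1)^2 + (r2*m3-r3*m2)^2" by simp
  ultimately show ?thesis by linarith
qed

lemma upper:
  fixes p s :: real and q e1 e2 f1 f2 :: complex
  assumes ps: "p + s = 1" "cmod q ^ 2 \<le> p * s"
    and e: "cmod e1^2 + cmod e2^2 = 1" and f: "cmod f1^2 + cmod f2^2 = 1"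
  shows "(p * cmod e1^2 + s * cmod e2^2 + 2 * Re (q * cnj e1 * e2))
       + (p * cmod f1^2 + s * cmod f2^2 + 2 * Re (q * cnj f1 * f2))
       \<le> 1 + cmod (cnj e1 * f1 + cnj e2 * f2)"
proof -
  define z where "z = cmod (cnj e1 * f1 + cnj e2 * f2)"
  define r1 where "r1 = 2 * Re q"
  define r2 where "r2 = 2 * Im q"
  define r3 where "r3 = p - s"
  define a1 where "a1 = 2 * Re (cnj e1 * e2)"
  define a2 where "a2 = - 2 * Im (cnj e1 * e2)"
  define a3 where "a3 = cmod e1^2 - cmod e2^2"
  define b1 where "b1 = 2 * Re (cnj f1 * f2)"
  define b2 where "b2 = - 2 * Im (cnj f1 * f2)"
  define b3 where "b3 = cmod f1^2 - cmod f2^2"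
  have Be: "p * cmod e1^2 + s * cmod e2^2 + 2 * Re (q * cnj e1 * e2) = 1/2 + (r1*a1+r2*a2+r3*a3)/2"
    using bloch[OF ps(1) e, of q] by (simp add: r1_def r2_def r3_def a1_def a2_def a3_def)
  have Bf: "p * cmod f1^2 + s * cmod f2^2 + 2 * Re (q * cnj f1 * f2) = 1/2 + (r1*b1+r2*b2+r3*b3)/2"
    using bloch[OF ps(1) f, of q] by (simp add: r1_def r2_def r3_def b1_def b2_def b3_def)
  have rr: "r1^2 + r2^2 + r3^2 \<le> 1"
  proof -
    have "r1^2 + r2^2 + r3^2 = 4 * cmod q ^ 2 + (p - s)^2"
      unfolding r1_def r2_def r3_def cmod_power2 by (simp add: power2_eq_square)
    also have "\<dots> \<le> 4 * (p * s) + (p - s)^2" using ps(2) by simp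
    also have "\<dots> = (p + s)^2" by (simp add: power2_eq_square algebra_simps)
    finally show ?thesis using ps(1) by simp
  qed
  have ee: "a1*a1 + a2*a2 + a3*a3 = 1"
  proof -
    have "a1*a1 + a2*a2 + a3*a3 = 2 * cmod (cnj e1 * e1 + cnj e2 * e2)^2 - 1"
      using NN[of e1 e2 e1 e2] e unfolding a1_def a2_def a3_def by algebra
    also have "cnj e1 * e1 + cnj e2 * e2 = of_real (cmod e1^2 + cmod e2^2)"
      unfolding cmod_power2 complex_eq_iff by (simp add: power2_eq_square)
    finally show ?thesis using e by simp
  qed
  have ff: "b1*b1 + b2*b2 + b3*b3 = 1"
  proof -
    have "b1*b1 + b2*b2 + b3*b3 = 2 * cmod (cnj f1 * f1 + cnj f2 * f2)^2 - 1"
      using NN[of f1 f2 f1 f2] f unfolding b1_def b2_def b3_def by algebra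
    also have "cnj f1 * f1 + cnj f2 * f2 = of_real (cmod f1^2 + cmod f2^2)"
      unfolding cmod_power2 complex_eq_iff by (simp add: power2_eq_square)
    finally show ?thesis using f by simp
  qed
  have ef: "a1*b1 + a2*b2 + a3*b3 = 2 * z^2 - 1"
    using NN[of e1 e2 f1 f2] e f unfolding a1_def a2_def a3_def b1_def b2_def b3_def z_def by algebra
  have MM: "(a1+b1)^2 + (a2+b2)^2 + (a3+b3)^2 = (2*z)^2"
    using ee ff ef by (simp add: power2_eq_square algebra_simps)
  have "(r1*(a1+b1) + r2*(a2+b2) + r3*(a3+b3))^2 \<le> (r1^2+r2^2+r3^2) * (2*z)^2"
    using lagrange3[of r1 "a1+b1" r2 "a2+b2" r3 "a3+b3"] unfolding MM .
  also have "\<dots> \<le> 1 * (2*z)^2" using rr by (intro mult_right_mono) auto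
  finally have "(r1*(a1+b1) + r2*(a2+b2) + r3*(a3+b3))^2 \<le> (2*z)^2" by simp
  hence "r1*(a1+b1) + r2*(a2+b2) + r3*(a3+b3) \<le> 2*z"
    by (rule power2_le_imp_le) (simp add: z_def)
  then show ?thesis unfolding Be Bf z_def[symmetric] by (simp add: field_simps)
qed

lemma MM_lemma:
  fixes e1 e2 f1 f2 :: complex
  assumes e: "cmod e1^2 + cmod e2^2 = 1" and f: "cmod f1^2 + cmod f2^2 = 1"
  shows "(2 * Re (cnj e1 * e2) + 2 * Re (cnj f1 * f2))^2 + (- 2 * Im (cnj e1 * e2) + - 2 * Im (cnj f1 * f2))^2
     + ((cmod e1^2 - cmod e2^2) + (cmod f1^2 - cmod f2^2))^2 = (2 * cmod (cnj e1 * f1 + cnj e2 * f2))^2"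
proof -
  define z where "z = cmod (cnj e1 * f1 + cnj e2 * f2)"
  define a1 where "a1 = 2 * Re (cnj e1 * e2)"
  define a2 where "a2 = - 2 * Im (cnj e1 * e2)"
  define a3 where "a3 = cmod e1^2 - cmod e2^2"
  define b1 where "b1 = 2 * Re (cnj f1 * f2)"
  define b2 where "b2 = - 2 * Im (cnj f1 * f2)"
  define b3 where "b3 = cmod f1^2 - cmod f2^2"
  have ee: "a1*a1 + a2*a2 + a3*a3 = 1"
  proof -
    have "a1*a1 + a2*a2 + a3*a3 = 2 * cmod (cnj e1 * e1 + cnj e2 * e2)^2 - 1"
      using NN[of e1 e2 e1 e2] e unfolding a1_def a2_def a3_def by algebra
    also have "cnj e1 * e1 + cnj e2 * e2 = of_real (cmod e1^2 + cmod e2^2)"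
      unfolding cmod_power2 complex_eq_iff by (simp add: power2_eq_square)
    finally show ?thesis using e by simp
  qed
  have ff: "b1*b1 + b2*b2 + b3*b3 = 1"
  proof -
    have "b1*b1 + b2*b2 + b3*b3 = 2 * cmod (cnj f1 * f1 + cnj f2 * f2)^2 - 1"
      using NN[of f1 f2 f1 f2] f unfolding b1_def b2_def b3_def by algebra
    also have "cnj f1 * f1 + cnj f2 * f2 = of_real (cmod f1^2 + cmod f2^2)"
      unfolding cmod_power2 complex_eq_iff by (simp add: power2_eq_square)
    finally show ?thesis using f by simp
  qed
  have ef: "a1*b1 + a2*b2 + a3*b3 = 2 * z^2 - 1"
    using NN[of e1 e2 f1 f2] e f unfolding a1_def a2_def a3_def b1_def b2_def b3_def z_def by algebra
  have MM: "(a1+b1)^2 + (a2+b2)^2 + (a3+b3)^2 = (2*z)^2"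
    using ee ff ef by (simp add: power2_eq_square algebra_simps)
  then show ?thesis unfolding a1_def a2_def a3_def b1_def b2_def b3_def z_def .
qed

lemma attain:
  fixes e1 e2 f1 f2 :: complex
  assumes e: "cmod e1^2 + cmod e2^2 = 1" and f: "cmod f1^2 + cmod f2^2 = 1"
  shows "\<exists>p s q. 0 \<le> p \<and> 0 \<le> s \<and> p + s = 1 \<and> cmod q ^ 2 \<le> p * s \<and>
     (p * cmod e1^2 + s * cmod e2^2 + 2 * Re (q * cnj e1 * e2))
       + (p * cmod f1^2 + s * cmod f2^2 + 2 * Re (q * cnj f1 * f2))
       = 1 + cmod (cnj e1 * f1 + cnj e2 * f2)"
proof -
  define z where "z = cmod (cnj e1 * f1 + cnj e2 * f2)"
  define m1 where "m1 = 2 * Re (cnj e1 * e2) + 2 * Re (cnj f1 * f2)"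
  define m2 where "m2 = - 2 * Im (cnj e1 * e2) + - 2 * Im (cnj f1 * f2)"
  define m3 where "m3 = (cmod e1^2 - cmod e2^2) + (cmod f1^2 - cmod f2^2)"
  have MM: "m1^2 + m2^2 + m3^2 = (2*z)^2"
    using MM_lemma[OF e f] unfolding m1_def m2_def m3_def z_def .
  define r1 where "r1 = m1 / (2*z)"
  define r2 where "r2 = m2 / (2*z)"
  define r3 where "r3 = m3 / (2*z)"
  define p where "p = (1 + r3) / 2"
  define s where "s = (1 - r3) / 2"
  define q where "q = Complex (r1/2) (r2/2)"
  have z0: "0 \<le> z" by (simp add: z_def)
  have rr: "r1^2 + r2^2 + r3^2 \<le> 1" and rM: "r1*m1 + r2*m2 + r3*m3 = 2*z"
  proof -
    have "r1^2 + r2^2 + r3^2 = (m1^2 + m2^2 + m3^2) / (2*z)^2"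
      by (simp add: r1_def r2_def r3_def power_divide add_divide_distrib)
    also have "\<dots> = (2*z)^2 / (2*z)^2" by (simp add: MM)
    finally show "r1^2 + r2^2 + r3^2 \<le> 1" by (cases "z = 0") auto
    have "r1*m1 + r2*m2 + r3*m3 = (m1^2 + m2^2 + m3^2) / (2*z)"
      by (simp add: r1_def r2_def r3_def power2_eq_square add_divide_distrib)
    also have "\<dots> = 2*z"
    proof (cases "z = 0")
      case True
      then have "m1^2 + m2^2 + m3^2 = 0" using MM by simp
      then show ?thesis using True by simp
    next
      case False
      then show ?thesis unfolding MM by (simp add: power2_eq_square)
    qed
    finally show "r1*m1 + r2*m2 + r3*m3 = 2*z" .
  qed
  have r3b: "r3^2 \<le> 1" using rr by (smt (verit) zero_le_power2)
  hence "\<bar>r3\<bar> \<le> 1" using abs_le_square_iff[of r3 1] by simp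
  hence ps: "0 \<le> p" "0 \<le> s" "p + s = 1" by (auto simp: p_def s_def field_simps)
  have qq: "cmod q ^ 2 \<le> p * s"
  proof -
    have "cmod q ^ 2 = (r1^2 + r2^2) / 4" unfolding q_def cmod_power2 by (simp add: power_divide)
    also have "\<dots> \<le> (1 - r3^2) / 4" using rr by simp
    also have "\<dots> = p * s" by (simp add: p_def s_def power2_eq_square field_simps)
    finally show ?thesis .
  qed
  have "(p * cmod e1^2 + s * cmod e2^2 + 2 * Re (q * cnj e1 * e2))
       + (p * cmod f1^2 + s * cmod f2^2 + 2 * Re (q * cnj f1 * f2))
       = 1 + (r1*m1 + r2*m2 + r3*m3)/2"
    unfolding bloch[OF ps(3) e] bloch[OF ps(3) f]
    by (simp add: q_def m1_def m2_def m3_def p_def s_def field_simps)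
  also have "\<dots> = 1 + z" using rM by simp
  finally show ?thesis using ps qq unfolding z_def by blast
qed

lemma depol_ketbra:
  assumes "norm \<psi> = 1"
  shows "depol \<rho> (ketbra \<psi>) = \<rho>"
proof -
  have "trace (ketbra \<psi>) = of_real (cmod (\<psi>$1)^2 + cmod (\<psi>$2)^2)"
    unfolding trace_2 ketbra_def cmod_power2 complex_eq_iff by (simp add: power2_eq_square)
  also have "\<dots> = 1" using unit_2[OF assms] by simp
  finally show ?thesis by (simp add: depol_def vec_eq_iff)
qed

lemma ketbra_density:
  assumes "norm e = 1"
  shows "density_op (ketbra e)"
proof (rule density_of)
  show "ketbra e $1$1 = of_real (cmod (e$1)^2)" "ketbra e $2$2 = of_real (cmod (e$2)^2)"
    unfolding ketbra_def cmod_power2 complex_eq_iff by (simp_all add: power2_eq_square)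
  show "ketbra e $1$2 = e$1 * cnj (e$2)" "ketbra e $2$1 = cnj (e$1 * cnj (e$2))"
    by (simp_all add: ketbra_def)
  show "0 \<le> cmod (e$1)^2" "0 \<le> cmod (e$2)^2" by simp_all
  show "cmod (e$1)^2 + cmod (e$2)^2 = 1" using unit_2[OF assms] .
  show "cmod (e$1 * cnj (e$2))^2 \<le> cmod (e$1)^2 * cmod (e$2)^2"
    by (simp add: norm_mult power_mult_distrib)
qed

lemma diff_ident:
  fixes e1 e2 f1 f2 :: complex
  shows "cmod (e1 * cnj e1 - f1 * cnj f1)^2 + cmod (e1 * cnj e2 - f1 * cnj f2)^2
       + cmod (e2 * cnj e1 - f2 * cnj f1)^2 + cmod (e2 * cnj e2 - f2 * cnj f2)^2
     = (cmod e1^2 + cmod e2^2)^2 + (cmod f1^2 + cmod f2^2)^2 - 2 * cmod (cnj e1 * f1 + cnj e2 * f2)^2"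
  unfolding cmod_power2 by (simp add: power2_eq_square algebra_simps)

lemma ketbra_eq_iff:
  assumes e: "norm e = 1" and f: "norm f = 1"
  shows "ketbra e = ketbra f \<longleftrightarrow> cmod (braket e f) = 1"
proof -
  define S where "S = cmod (e$1 * cnj (e$1) - f$1 * cnj (f$1))^2 + cmod (e$1 * cnj (e$2) - f$1 * cnj (f$2))^2
       + cmod (e$2 * cnj (e$1) - f$2 * cnj (f$1))^2 + cmod (e$2 * cnj (e$2) - f$2 * cnj (f$2))^2"
  have S: "S = 2 - 2 * cmod (braket e f)^2"
    unfolding S_def diff_ident braket_2 unit_2[OF e] unit_2[OF f] by simp
  have "ketbra e = ketbra f \<longleftrightarrow> S = 0"
    unfolding S_def by (simp add: vec_eq_iff forall_2 ketbra_def add_nonneg_eq_0_iff)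
  also have "\<dots> \<longleftrightarrow> cmod (braket e f)^2 = 1" unfolding S by auto
  also have "\<dots> \<longleftrightarrow> cmod (braket e f) = 1"
    using power2_eq_1_iff[of "cmod (braket e f)"] norm_ge_zero[of "braket e f"] by auto
  finally show ?thesis .
qed

definition mk :: "real \<Rightarrow> real \<Rightarrow> complex \<Rightarrow> complex^2^2" where
  "mk p s q = (\<chi> i j. if i = 1 then (if j = 1 then of_real p else q) else (if j = 1 then cnj q else of_real s))"

lemma mk_nth: "mk p s q $1$1 = of_real p" "mk p s q $2$2 = of_real s"
  "mk p s q $1$2 = q" "mk p s q $2$1 = cnj q"
  by (simp_all add: mk_def)

lemma sv:
  assumes "density_op \<rho>" "norm \<psi> = 1" "norm \<phi> = 1"
  shows "success_val (depol \<rho>) \<psi> \<phi> e f =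
    ((Re (\<rho>$1$1) * cmod (e$1)^2 + Re (\<rho>$2$2) * cmod (e$2)^2 + 2 * Re (\<rho>$1$2 * cnj (e$1) * e$2))
    + (Re (\<rho>$1$1) * cmod (f$1)^2 + Re (\<rho>$2$2) * cmod (f$2)^2 + 2 * Re (\<rho>$1$2 * cnj (f$1) * f$2))) / 2"
proof -
  note D = density_props[OF assms(1)]
  note H = quad_herm[OF D(1) D(2) refl D(3)]
  show ?thesis unfolding success_val_def depol_ketbra[OF assms(2)] depol_ketbra[OF assms(3)] H
    by (simp add: add_divide_distrib)
qed

theorem corollary1:
  fixes \<psi> \<phi> e f :: "complex^2"
  assumes "norm \<psi> = 1" and "norm \<phi> = 1" and "norm e = 1" and "norm f = 1"
  shows "(\<exists>\<Psi>\<in>depol_channels. success_val \<Psi> \<psi> \<phi> e f = (1 + cmod (braket e f)) / 2)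
       \<and> (\<forall>\<Psi>\<in>depol_channels. success_val \<Psi> \<psi> \<phi> e f \<le> (1 + cmod (braket e f)) / 2)
       \<and> ((1 + cmod (braket e f)) / 2 = 1 \<longleftrightarrow> cmod (braket e f) = 1)
       \<and> (jointly_convertible depol_channels \<psi> \<phi> e f \<longleftrightarrow> cmod (braket e f) = 1)"
proof (intro conjI)
  note ue = unit_2[OF assms(3)] and uf = unit_2[OF assms(4)]
  show "\<exists>\<Psi>\<in>depol_channels. success_val \<Psi> \<psi> \<phi> e f = (1 + cmod (braket e f)) / 2"
  proof -
    obtain p s q where pq: "0 \<le> p" "0 \<le> s" "p + s = 1" "cmod q ^ 2 \<le> p * s"
      and val: "(p * cmod (e$1)^2 + s * cmod (e$2)^2 + 2 * Re (q * cnj (e$1) * e$2))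
       + (p * cmod (f$1)^2 + s * cmod (f$2)^2 + 2 * Re (q * cnj (f$1) * f$2))
       = 1 + cmod (cnj (e$1) * f$1 + cnj (e$2) * f$2)"
      using attain[OF ue uf] by blast
    have D: "density_op (mk p s q)" by (rule density_of[OF mk_nth pq])
    have "depol (mk p s q) \<in> depol_channels" unfolding depol_channels_def using D by blast
    moreover have "success_val (depol (mk p s q)) \<psi> \<phi> e f = (1 + cmod (braket e f)) / 2"
      unfolding sv[OF D assms(1,2)] mk_nth braket_2 val[symmetric] by simp
    ultimately show ?thesis by blast
  qed
  show "\<forall>\<Psi>\<in>depol_channels. success_val \<Psi> \<psi> \<phi> e f \<le> (1 + cmod (braket e f)) / 2"
  proof
    fix \<Psi> assume "\<Psi> \<in> depol_channels"
    then obtain \<rho> where r: "\<Psi> = depol \<rho>" "density_op \<rho>" unfolding depol_channels_def by blast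
    note D = density_props[OF r(2)]
    show "success_val \<Psi> \<psi> \<phi> e f \<le> (1 + cmod (braket e f)) / 2"
      unfolding r(1) sv[OF r(2) assms(1,2)] braket_2
      using upper[OF D(6) D(7) ue uf] by simp
  qed
  show "((1 + cmod (braket e f)) / 2 = 1 \<longleftrightarrow> cmod (braket e f) = 1)" by auto
  show "jointly_convertible depol_channels \<psi> \<phi> e f \<longleftrightarrow> cmod (braket e f) = 1"
  proof
    assume "jointly_convertible depol_channels \<psi> \<phi> e f"
    then obtain \<rho> where "density_op \<rho>" "depol \<rho> (ketbra \<psi>) = ketbra e" "depol \<rho> (ketbra \<phi>) = ketbra f"
      unfolding jointly_convertible_def depol_channels_def by blast
    then have "ketbra e = ketbra f" using depol_ketbra[OF assms(1)] depol_ketbra[OF assms(2)] by simp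
    then show "cmod (braket e f) = 1" using ketbra_eq_iff[OF assms(3,4)] by simp
  next
    assume "cmod (braket e f) = 1"
    then have kf: "ketbra e = ketbra f" using ketbra_eq_iff[OF assms(3,4)] by simp
    have "depol (ketbra e) \<in> depol_channels"
      unfolding depol_channels_def using ketbra_density[OF assms(3)] by blast
    moreover have "depol (ketbra e) (ketbra \<psi>) = ketbra e" "depol (ketbra e) (ketbra \<phi>) = ketbra f"
      using depol_ketbra[OF assms(1)] depol_ketbra[OF assms(2)] kf by simp_all
    ultimately show "jointly_convertible depol_channels \<psi> \<phi> e f"
      unfolding jointly_convertible_def by blast
  qed
qed

end
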